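(* Fix integers $k\ge 2$ and $1 \le t \le k/2$. Let $X$ be a set of $n$ elements with a fixed but unknown total order, and consider a $(k,t)$ scale, which on input any $k$-element subset of $X$ returns the $t$-th smallest element of that subset. Let $S$ be the set of the $t-1$ smallest elements of $X$ and $L$ the set of the $k-t$ largest elements of $X$. Then any off-line (non-adaptive) family of queries from whose results one can determine, for every possible ordering of $X$, the relative order of the elements of $X \setminus (S\cup L)$ must contain at least $$\frac{\binom{n}{k-(t-1)}}{\binom{k}{k-(t-1)}}$$ queries; in particular $\Omega(n^{k-t+1})$ queries are needed for fixed $k,t$.
   Context: A query is a $k$-element subset of $X$; the scale returns its $t$-th smallest element. In the off-line setting the whole family of queries must be specified in advance, and all results are then revealed simultaneously. *)

theory Defs
  imports Complex_Main
begin

text \<open>A total order on the finite ground set X is encoded by its rank function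
  sigma: X -> {0..<card X} (bijective); x is smaller than y iff sigma x < sigma y.\<close>
definition is_ordering :: "'a set \<Rightarrow> ('a \<Rightarrow> nat) \<Rightarrow> bool" where
  "is_ordering X \<sigma> \<longleftrightarrow> bij_betw \<sigma> X {0..<card X}"

definition scale_answer :: "('a \<Rightarrow> nat) \<Rightarrow> nat \<Rightarrow> 'a set \<Rightarrow> 'a" where
  "scale_answer \<sigma> t Q = (THE x. x \<in> Q \<and> card {y \<in> Q. \<sigma> y < \<sigma> x} = t - 1)"

definition small_set :: "'a set \<Rightarrow> ('a \<Rightarrow> nat) \<Rightarrow> nat \<Rightarrow> 'a set" where
  "small_set X \<sigma> t = {x \<in> X. \<sigma> x < t - 1}"

definition large_set :: "'a set \<Rightarrow> ('a \<Rightarrow> nat) \<Rightarrow> nat \<Rightarrow> nat \<Rightarrow> 'a set" where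
  "large_set X \<sigma> k t = {x \<in> X. card X - (k - t) \<le> \<sigma> x}"

definition middle_set :: "'a set \<Rightarrow> ('a \<Rightarrow> nat) \<Rightarrow> nat \<Rightarrow> nat \<Rightarrow> 'a set" where
  "middle_set X \<sigma> k t = X - (small_set X \<sigma> t \<union> large_set X \<sigma> k t)"

definition determines_middle_order :: "'a set \<Rightarrow> nat \<Rightarrow> nat \<Rightarrow> 'a set set \<Rightarrow> bool" where
  "determines_middle_order X k t F \<longleftrightarrow>
    (\<forall>\<sigma>1 \<sigma>2. is_ordering X \<sigma>1 \<and> is_ordering X \<sigma>2 \<and>
        (\<forall>Q\<in>F. scale_answer \<sigma>1 t Q = scale_answer \<sigma>2 t Q) \<longrightarrow>
        middle_set X \<sigma>1 k t = middle_set X \<sigma>2 k t \<and>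
        (\<forall>x\<in>middle_set X \<sigma>1 k t. \<forall>y\<in>middle_set X \<sigma>1 k t.
            \<sigma>1 x < \<sigma>1 y \<longleftrightarrow> \<sigma>2 x < \<sigma>2 y))"

end

theory Submission imports Defs "HOL-Combinatorics.Transposition" begin

lemma swap_answer:
  assumes inj: "inj_on s1 X" and ab: "a \<in> X" "b \<in> X" and sb: "s1 b = s1 a + 1"
    and QX: "Q \<subseteq> X" and t: "t \<ge> 1"
    and big: "a \<in> Q \<Longrightarrow> b \<in> Q \<Longrightarrow> t \<le> card {y\<in>Q. s1 y < s1 a}"
    and s2: "s2 = (\<lambda>x. if x = a then s1 b else if x = b then s1 a else s1 x)"
    and fin: "finite Q"
  shows "scale_answer s1 t Q = scale_answer s2 t Q"
proof -
  have neq: "a \<noteq> b" using sb by auto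
  have P: "(x \<in> Q \<and> card {y \<in> Q. s1 y < s1 x} = t - 1) = (x \<in> Q \<and> card {y \<in> Q. s2 y < s2 x} = t - 1)" for x
  proof (cases "x \<in> Q")
    case False then show ?thesis by simp
  next
    case xQ: True
    show ?thesis
    proof (cases "a \<in> Q \<and> b \<in> Q \<and> x \<in> {a,b}")
      case True
      let ?B = "{y\<in>Q. s1 y < s1 a}"
      have "t \<le> card ?B" using big True by blast
      have sub1: "?B \<subseteq> {y \<in> Q. s1 y < s1 x}" using True sb by auto
      have sub2: "?B \<subseteq> {y \<in> Q. s2 y < s2 x}" using True sb s2 by auto
      have "card ?B \<le> card {y \<in> Q. s1 y < s1 x}" by (rule card_mono) (use fin sub1 in auto)
      moreover have "card ?B \<le> card {y \<in> Q. s2 y < s2 x}" by (rule card_mono) (use fin sub2 in auto)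
      ultimately show ?thesis using \<open>t \<le> card ?B\<close> t by auto
    next
      case False
      have xX: "x \<in> X" using xQ QX by auto
      have "{y \<in> Q. s1 y < s1 x} = {y \<in> Q. s2 y < s2 x}"
      proof (intro Collect_cong conj_cong refl)
        fix y assume yQ: "y \<in> Q"
        then have yX: "y \<in> X" using QX by auto
        have i1: "s1 y = s1 a \<Longrightarrow> y = a" by (rule inj_onD[OF inj _ yX ab(1)])
        have i2: "s1 y = s1 b \<Longrightarrow> y = b" by (rule inj_onD[OF inj _ yX ab(2)])
        have i3: "s1 x = s1 a \<Longrightarrow> x = a" by (rule inj_onD[OF inj _ xX ab(1)])
        have i4: "s1 x = s1 b \<Longrightarrow> x = b" by (rule inj_onD[OF inj _ xX ab(2)])
        have yb: "y \<noteq> b" if "x = a" using False xQ yQ that by auto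
        have ya: "y \<noteq> a" if "x = b" using False xQ yQ that by auto
        show "(s1 y < s1 x) = (s2 y < s2 x)"
        proof (cases "x = a")
          case xa: True
          show ?thesis
          proof (cases "y = a")
            case True then show ?thesis using xa by simp
          next
            case yna: False
            have "s2 x = s1 a + 1" using sb xa by (simp add: s2)
            moreover have "s2 y = s1 y" using yb[OF xa] yna by (simp add: s2)
            moreover have "s1 y \<noteq> s1 a + 1" using yb[OF xa] i2 sb by auto
            moreover have "s1 y \<noteq> s1 a" using yna i1 by auto
            ultimately show ?thesis using xa by auto
          qed
        next
          case xna: False
          show ?thesis
          proof (cases "x = b")
            case xb: True
            show ?thesis
            proof (cases "y = b")
              case True then show ?thesis using xb by simp
            next
              case ynb: False
              have "s2 x = s1 a" using neq xb by (simp add: s2)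
              moreover have "s2 y = s1 y" using ya[OF xb] ynb by (simp add: s2)
              moreover have "s1 y \<noteq> s1 a" using ya[OF xb] i1 by auto
              moreover have "s1 y \<noteq> s1 b" using ynb i2 by auto
              ultimately show ?thesis using xb sb by auto
            qed
          next
            case xnb: False
            then have sx: "s2 x = s1 x" using xna by (simp add: s2)
            have n1: "s1 x \<noteq> s1 a" "s1 x \<noteq> s1 b" using i3 i4 xna xnb by auto
            show ?thesis
            proof (cases "y = a")
              case True
              then have "s2 y = s1 b" by (simp add: s2)
              then show ?thesis using True sx n1 sb by auto
            next
              case yna: False
              show ?thesis
              proof (cases "y = b")
                case True
                then have "s2 y = s1 a" using yna neq by (simp add: s2)
                then show ?thesis using True sx n1 sb by auto
              next
                case False
                then have "s2 y = s1 y" using yna by (simp add: s2)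
                then show ?thesis using sx by simp
              qed
            qed
          qed
        qed
      qed
      then show ?thesis by simp
    qed
  qed
  show ?thesis unfolding scale_answer_def using P by presburger
qed

lemma cover:
  fixes X :: "'a set" and F :: "'a set set" and k t :: nat
  assumes finX: "finite X"
    and "k \<ge> 2" and t1: "1 \<le> t" and "2 * t \<le> k"
    and kn: "card X \<ge> k"
    and FQ: "\<forall>Q\<in>F. Q \<subseteq> X \<and> card Q = k"
    and det: "determines_middle_order X k t F"
    and TX: "T \<subseteq> X" and cT: "card T = k - (t - 1)"
  shows "\<exists>Q\<in>F. T \<subseteq> Q"
proof (rule ccontr)
  assume nc: "\<not> (\<exists>Q\<in>F. T \<subseteq> Q)"
  define n where "n = card X"
  define m where "m = k - (t - 1)"
  have m2: "m \<ge> 2" and mk: "m \<le> k" using assms unfolding m_def by auto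
  have mn: "m \<le> n" using mk kn n_def by auto
  have mt: "m + t = k + 1" unfolding m_def using t1 \<open>2 * t \<le> k\<close> by simp
  have nm: "n - m + m = n" using mn by simp
  have kt: "k - t + t = k" using \<open>2 * t \<le> k\<close> by simp
  have nkt: "card X - (k - t) + (k - t) = card X" using kn by simp
  have t11: "t - 1 + 1 = t" using t1 by simp
  have finT: "finite T" using TX finX finite_subset by auto
  obtain h where h: "bij_betw h {0..<m} T" using ex_bij_betw_nat_finite[OF finT] cT m_def by auto
  have cXT: "card (X - T) = n - m" using card_Diff_subset[OF finT TX] cT n_def m_def by simp
  obtain g where g: "bij_betw g (X - T) {0..<n-m}"
    using ex_bij_betw_finite_nat[of "X - T"] finX cXT by auto
  define s1 where "s1 x = (if x \<in> T then n - m + the_inv_into {0..<m} h x else g x)" for x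
  have s1h: "s1 (h i) = n - m + i" if "i < m" for i
  proof -
    have "h i \<in> T" using h that bij_betwE by fastforce
    moreover have "the_inv_into {0..<m} h (h i) = i"
      using h that by (simp add: bij_betw_def the_inv_into_f_f)
    ultimately show ?thesis unfolding s1_def by simp
  qed
  have bT: "bij_betw s1 T {n-m..<n}"
  proof -
    have b1: "bij_betw (the_inv_into {0..<m} h) T {0..<m}" using bij_betw_the_inv_into[OF h] .
    have b2: "bij_betw (\<lambda>i. n - m + i) {0..<m} {n-m..<n}"
    proof (rule bij_betw_imageI)
      show "inj_on (\<lambda>i. n - m + i) {0..<m}" by (auto simp: inj_on_def)
      show "(\<lambda>i. n - m + i) ` {0..<m} = {n-m..<n}"
      proof
        show "(\<lambda>i. n - m + i) ` {0..<m} \<subseteq> {n-m..<n}" using mn by auto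
        show "{n-m..<n} \<subseteq> (\<lambda>i. n - m + i) ` {0..<m}"
        proof
          fix x assume "x \<in> {n-m..<n}"
          then show "x \<in> (\<lambda>i. n - m + i) ` {0..<m}"
            using mn by (intro image_eqI[where x="x - (n - m)"]) auto
        qed
      qed
    qed
    have "bij_betw ((\<lambda>i. n - m + i) \<circ> the_inv_into {0..<m} h) T {n-m..<n}"
      using bij_betw_trans[OF b1 b2] .
    then show ?thesis by (rule bij_betw_cong[THEN iffD1, rotated]) (auto simp: s1_def)
  qed
  have bXT: "bij_betw s1 (X - T) {0..<n-m}"
    using g by (rule bij_betw_cong[THEN iffD1, rotated]) (auto simp: s1_def)
  have "bij_betw s1 ((X - T) \<union> T) ({0..<n-m} \<union> {n-m..<n})"
    by (rule bij_betw_combine[OF bXT bT]) auto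
  moreover have "(X - T) \<union> T = X" using TX by auto
  moreover have "{0..<n-m} \<union> {n-m..<n} = {0..<n}" using mn by auto
  ultimately have bX: "bij_betw s1 X {0..<n}" by simp
  define a where "a = h 0"
  define b where "b = h 1"
  have aT: "a \<in> T" and bT': "b \<in> T" using h m2 unfolding a_def b_def by (auto dest: bij_betwE)
  have sa: "s1 a = n - m" and sb: "s1 b = n - m + 1" using s1h m2 unfolding a_def b_def by auto
  have aX: "a \<in> X" and bX': "b \<in> X" using aT bT' TX by auto
  define s2 where "s2 = (\<lambda>x. if x = a then s1 b else if x = b then s1 a else s1 x)"
  have s2sw: "s2 = Fun.swap a b s1"
    by (rule ext) (simp add: s2_def transpose_def)
  have bX2: "bij_betw s2 X {0..<n}"
  proof -
    have "bij_betw (Transposition.transpose a b) X X"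
      by (rule bij_betw_transpose_iff) (use aX bX' in blast)
    from bij_betw_trans[OF this bX] show ?thesis unfolding s2sw .
  qed
  have inj: "inj_on s1 X" using bX bij_betw_def by blast
  have high: "y \<in> T" if "y \<in> X" "s1 y \<ge> n - m" for y
  proof (rule ccontr)
    assume "y \<notin> T"
    then have "s1 y = g y" "y \<in> X - T" using that by (auto simp: s1_def)
    then have "g y \<in> {0..<n-m}" using g by (meson bij_betwE)
    then show False using \<open>s1 y = g y\<close> that(2) by simp
  qed
  have answers: "\<forall>Q\<in>F. scale_answer s1 t Q = scale_answer s2 t Q"
  proof
    fix Q assume QF: "Q \<in> F"
    have QX: "Q \<subseteq> X" and cQ: "card Q = k" using FQ QF by auto
    have finQ: "finite Q" using QX finX finite_subset by auto
    show "scale_answer s1 t Q = scale_answer s2 t Q"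
    proof (rule swap_answer[OF inj aX bX' _ QX t1 _ s2_def finQ])
      show "s1 b = s1 a + 1" using sa sb by simp
      assume aQ: "a \<in> Q" and bQ: "b \<in> Q"
      let ?B = "{y\<in>Q. s1 y < s1 a}"
      let ?C = "Q \<inter> (T - {a,b})"
      have "Q \<subseteq> ?B \<union> {a,b} \<union> ?C"
      proof
        fix y assume yQ: "y \<in> Q"
        show "y \<in> ?B \<union> {a,b} \<union> ?C"
        proof (cases "s1 y < s1 a \<or> y = a \<or> y = b")
          case True then show ?thesis using yQ by auto
        next
          case False
          then have "s1 y \<ge> n - m" using sa by auto
          then have "y \<in> T" using high yQ QX by auto
          then show ?thesis using yQ False by auto
        qed
      qed
      then have "card Q \<le> card (?B \<union> {a,b} \<union> ?C)"
        by (intro card_mono) (use finQ in auto)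
      also have "\<dots> \<le> card ?B + card {a,b} + card ?C"
        using card_Un_le[of "?B \<union> {a,b}" ?C] card_Un_le[of ?B "{a,b}"] by linarith
      also have "card {a,b} \<le> 2" by (simp add: card_insert_if)
      finally have c1: "k \<le> card ?B + 2 + card ?C" using cQ by simp
      obtain c where cT': "c \<in> T" and cQ': "c \<notin> Q" using nc QF by auto
      have "?C \<subset> T - {a,b}" using cT' cQ' aQ bQ by auto
      then have "card ?C < card (T - {a,b})" by (intro psubset_card_mono) (use finT in auto)
      moreover have "card (T - {a,b}) = m - 2"
      proof -
        have "a \<noteq> b" using sa sb by auto
        then have "card {a,b} = 2" by simp
        then show ?thesis using aT bT' finT cT m_def by (simp add: card_Diff_subset)
      qed
      ultimately have "card ?C + 3 \<le> m" by simp
      then show "t \<le> card ?B" using c1 mt by linarith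
    qed
  qed
  have pre: "is_ordering X s1 \<and> is_ordering X s2 \<and> (\<forall>Q\<in>F. scale_answer s1 t Q = scale_answer s2 t Q)"
    using bX bX2 answers unfolding is_ordering_def n_def by simp
  have eq: "middle_set X s1 k t = middle_set X s2 k t"
    using det[unfolded determines_middle_order_def, rule_format, OF pre] by (rule conjunct1)
  moreover have "a \<in> middle_set X s1 k t"
  proof -
    have "\<not> s1 a < t - 1" "\<not> card X - (k - t) \<le> s1 a"
      using sa mt nm kt nkt t11 n_def kn by linarith+
    then show ?thesis using aX unfolding middle_set_def small_set_def large_set_def by simp
  qed
  moreover have "a \<notin> middle_set X s2 k t"
  proof -
    have "s2 a = s1 b" by (simp add: s2_def)
    moreover have "card X - (k - t) \<le> s1 b"
      using sb mt nm kt nkt t11 n_def kn by linarith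
    ultimately have "card X - (k - t) \<le> s2 a" by simp
    then show ?thesis using aX unfolding middle_set_def small_set_def large_set_def by simp
  qed
  ultimately show False by (simp only: eq)
qed

theorem mainTheorem3:
  fixes X :: "'a set" and F :: "'a set set" and k t :: nat
  assumes "finite X"
    and "k \<ge> 2" and "1 \<le> t" and "2 * t \<le> k"
    and "card X \<ge> k"
    and "\<forall>Q\<in>F. Q \<subseteq> X \<and> card Q = k"
    and "determines_middle_order X k t F"
  shows "real (card F) \<ge> real (card X choose (k - (t - 1))) / real (k choose (k - (t - 1)))"
proof -
  define m where "m = k - (t - 1)"
  have mk: "m \<le> k" unfolding m_def by simp
  have finF: "finite F"
  proof (rule finite_subset)
    show "F \<subseteq> Pow X" using assms(6) by auto
    show "finite (Pow X)" using assms(1) by simp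
  qed
  have sub: "{T. T \<subseteq> X \<and> card T = m} \<subseteq> (\<Union>Q\<in>F. {T. T \<subseteq> Q \<and> card T = m})"
  proof
    fix T assume "T \<in> {T. T \<subseteq> X \<and> card T = m}"
    then have "T \<subseteq> X" "card T = k - (t - 1)" unfolding m_def by auto
    from cover[OF assms this] obtain Q where "Q \<in> F" "T \<subseteq> Q" by blast
    then show "T \<in> (\<Union>Q\<in>F. {T. T \<subseteq> Q \<and> card T = m})"
      using \<open>T \<in> {T. T \<subseteq> X \<and> card T = m}\<close> by blast
  qed
  have finU: "finite (\<Union>Q\<in>F. {T. T \<subseteq> Q \<and> card T = m})"
  proof (rule finite_subset)
    show "(\<Union>Q\<in>F. {T. T \<subseteq> Q \<and> card T = m}) \<subseteq> Pow X" using assms(6) by auto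
    show "finite (Pow X)" using assms(1) by simp
  qed
  have "card X choose m = card {T. T \<subseteq> X \<and> card T = m}"
    using n_subsets[OF assms(1)] by simp
  also have "\<dots> \<le> card (\<Union>Q\<in>F. {T. T \<subseteq> Q \<and> card T = m})"
    by (rule card_mono[OF finU sub])
  also have "\<dots> \<le> (\<Sum>Q\<in>F. card {T. T \<subseteq> Q \<and> card T = m})"
    by (rule card_UN_le[OF finF])
  also have "\<dots> = (\<Sum>Q\<in>F. k choose m)"
  proof (rule sum.cong[OF refl])
    fix Q assume "Q \<in> F"
    then have QX: "Q \<subseteq> X" "card Q = k" using assms(6) by auto
    then have "finite Q" "card Q = k" using assms(1) finite_subset by auto
    then show "card {T. T \<subseteq> Q \<and> card T = m} = k choose m"
      using n_subsets[OF \<open>finite Q\<close>, of m] \<open>card Q = k\<close> by simp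
  qed
  also have "\<dots> = card F * (k choose m)" by simp
  finally have le: "card X choose m \<le> card F * (k choose m)" .
  have pos: "0 < real (k choose m)" using mk by simp
  have "real (card X choose m) \<le> real (card F) * real (k choose m)"
    using le by (metis of_nat_le_iff of_nat_mult)
  then have "real (card X choose m) / real (k choose m) \<le> real (card F)"
    by (subst pos_divide_le_eq[OF pos])
  then show ?thesis unfolding m_def .
qed

end
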